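(* Let $q\geq 19$ and $n\geq 2^q/\binom{q}{\leq 2}$ be integers, and let $\Delta$ be defined (as in the context) for the $q$-round pathological liar game with $2$ lies and initial state $(n,0,0)$. Then $$\Delta=-A\binom{q-1}{2}-B\binom{q-2}{1},$$ where $A=n\bmod 2$ and $B=0$ if $n\equiv 0\pmod 4$, $B=2\cdot(q\bmod 2)$ if $n\equiv1\pmod 4$, $B=(1-q^3)\bmod 4$ if $n\equiv 2\pmod 4$, and $B=(1+q^3)\bmod 4$ if $n\equiv 3\pmod 4$. Furthermore, there is a choice of questions $\vec{a},\vec{b}^{Y},\vec{b}^{N}$ attaining the maximum defining $\Delta$ such that every possible state after the first two rounds has last coordinate (number of elements with $2$ lies) at least $(q-2)^2+\binom{q-2}{\leq 2}$.
   Context: Liar game with $2$ lies: a state is $\vec{x}=(x_0,x_1,x_2)$ of nonnegative integers; a legal question is $\vec{a}=(a_0,a_1,a_2)$ with integers $0\leq a_i\leq x_i$; the two possible next states are $Y(\vec{x},\vec{a})=(a_0,\,a_1+x_0-a_0,\,a_2+x_1-a_1)$ and $N(\vec{x},\vec{a})=(x_0-a_0,\,x_1-a_1+a_0,\,x_2-a_2+a_1)$. Weight: $wt_j(\vec{x})=x_0\binom{j}{\leq 2}+x_1\binom{j}{\leq 1}+x_2$, with $\binom{j}{\leq m}=\sum_{i=0}^m\binom{j}{i}$. Weight imbalance: $\Delta_j(\vec{x},\vec{a})=wt_j(Y(\vec{x},\vec{a}))-wt_j(N(\vec{x},\vec{a}))$. For the initial state $(n,0,0)$, Paul's first question is $\vec{a}$,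 and his second question is $\vec{b}^{Y}$ (legal for $Y((n,0,0),\vec{a})$) if Carole answered Y and $\vec{b}^{N}$ (legal for $N((n,0,0),\vec{a})$) if she answered N. Set $\Delta_{q-1}=\Delta_{q-1}((n,0,0),\vec{a})$, $\Delta^{Y}_{q-2}=\Delta_{q-2}(Y((n,0,0),\vec{a}),\vec{b}^{Y})$, $\Delta^{N}_{q-2}=\Delta_{q-2}(N((n,0,0),\vec{a}),\vec{b}^{N})$. Then $\Delta$ is defined as the maximum, over all such legal $\vec{a},\vec{b}^{Y},\vec{b}^{N}$ for which $\Delta_{q-1},\Delta^{Y}_{q-2},\Delta^{N}_{q-2}$ are all nonnegative, of $$\min\{\Delta_{q-1}+2\Delta^{Y}_{q-2},\ \Delta_{q-1}-2\Delta^{Y}_{q-2},\ -\Delta_{q-1}+2\Delta^{N}_{q-2},\ -\Delta_{q-1}-2\Delta^{N}_{q-2}\}.$$ "$m\bmod 2$", "$m\bmod 4$" denote least nonnegative residues. *)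

theory Defs
  imports Complex_Main
begin

definition bsum :: "nat \<Rightarrow> nat \<Rightarrow> nat" where
  "bsum j m = (\<Sum>i\<le>m. j choose i)"

type_synonym lstate = "nat \<times> nat \<times> nat"

fun legal :: "lstate \<Rightarrow> lstate \<Rightarrow> bool" where
  "legal (x0, x1, x2) (a0, a1, a2) \<longleftrightarrow> a0 \<le> x0 \<and> a1 \<le> x1 \<and> a2 \<le> x2"

fun Yst :: "lstate \<Rightarrow> lstate \<Rightarrow> lstate" where
  "Yst (x0, x1, x2) (a0, a1, a2) = (a0, a1 + x0 - a0, a2 + x1 - a1)"

fun Nst :: "lstate \<Rightarrow> lstate \<Rightarrow> lstate" where
  "Nst (x0, x1, x2) (a0, a1, a2) = (x0 - a0, x1 - a1 + a0, x2 - a2 + a1)"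

fun wt :: "nat \<Rightarrow> lstate \<Rightarrow> int" where
  "wt j (x0, x1, x2) = int x0 * int (bsum j 2) + int x1 * int (bsum j 1) + int x2"

definition imb :: "nat \<Rightarrow> lstate \<Rightarrow> lstate \<Rightarrow> int" where
  "imb j x a = wt j (Yst x a) - wt j (Nst x a)"

definition admissible :: "nat \<Rightarrow> nat \<Rightarrow> lstate \<Rightarrow> lstate \<Rightarrow> lstate \<Rightarrow> bool" where
  "admissible q n a bY bN \<longleftrightarrow>
     legal (n, 0, 0) a \<and> legal (Yst (n, 0, 0) a) bY \<and> legal (Nst (n, 0, 0) a) bN \<and>
     imb (q - 1) (n, 0, 0) a \<ge> 0 \<and>
     imb (q - 2) (Yst (n, 0, 0) a) bY \<ge> 0 \<and>
     imb (q - 2) (Nst (n, 0, 0) a) bN \<ge> 0"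

definition qval :: "nat \<Rightarrow> nat \<Rightarrow> lstate \<Rightarrow> lstate \<Rightarrow> lstate \<Rightarrow> int" where
  "qval q n a bY bN =
    (let d = imb (q - 1) (n, 0, 0) a;
         dY = imb (q - 2) (Yst (n, 0, 0) a) bY;
         dN = imb (q - 2) (Nst (n, 0, 0) a) bN
     in min (min (d + 2 * dY) (d - 2 * dY)) (min (- d + 2 * dN) (- d - 2 * dN)))"

definition Delta :: "nat \<Rightarrow> nat \<Rightarrow> int" where
  "Delta q n = Max {qval q n a bY bN | a bY bN. admissible q n a bY bN}"

end

theory Submission
  imports Defs
begin

lemma bsum2: "bsum j 2 = 1 + j + (j choose 2)"
  by (simp add: bsum_def numeral_2_eq_2 atMost_Suc)
lemma bsum1: "bsum j (Suc 0) = 1 + j"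
  by (simp add: bsum_def atMost_Suc)

definition E :: "nat \<Rightarrow> nat \<Rightarrow> nat \<Rightarrow> nat \<Rightarrow> nat \<Rightarrow> int" where
  "E m y0 y1 b0 b1 = (2 * int b0 - int y0) * int (m choose 2) + (2 * int b1 - int y1) * int m"

lemma imb_red:
  assumes "b0 \<le> x0" "b1 \<le> x1"
  shows "imb j (x0, x1, 0) (b0, b1, 0) = E j x0 x1 b0 b1"
  using assms by (simp add: imb_def E_def bsum2 bsum1 of_nat_diff algebra_simps)

lemma imb_first:
  assumes "a0 \<le> n"
  shows "imb j (n, 0, 0) (a0, 0, 0) = (2 * int a0 - int n) * int (j choose 2)"
  using imb_red[of a0 n 0 0 j] assms by (simp add: E_def)


definition tmin :: "nat \<Rightarrow> nat \<Rightarrow> nat \<Rightarrow> int" where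
  "tmin m y0 y1 = (if odd m then (if odd (y0 * ((m - 1) div 2) + y1) then int m else 0)
                   else (if odd y0 then int (m div 2) else 0))"

lemma choose2_odd: "(2*h+1) choose 2 = (2*h+1) * h"
  by (simp add: choose_two)
lemma choose2_even: "(2*h) choose 2 = h * (2*h-1)"
proof -
  have "(2*h) choose 2 = 2*h*(2*h-1) div 2" by (simp add: choose_two)
  also have "\<dots> = h * (2*h-1)" by simp
  finally show ?thesis .
qed

lemma lowE:
  assumes "m > 0" "E m y0 y1 b0 b1 \<ge> 0"
  shows "E m y0 y1 b0 b1 \<ge> tmin m y0 y1"
proof (cases "odd m")
  case True
  then obtain h where m: "m = 2*h+1" by (metis oddE)
  have hm: "(m - 1) div 2 = h" using m by simp
  define w where "w = (2 * int b0 - int y0) * int h + 2 * int b1 - int y1"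
  have Ew: "E m y0 y1 b0 b1 = int m * w"
    unfolding E_def w_def m choose2_odd by (simp add: algebra_simps)
  have w0: "w \<ge> 0" using assms Ew by (simp add: zero_le_mult_iff)
  show ?thesis
  proof (cases "odd (y0 * h + y1)")
    case True
    have "w = 2 * (int b0 * int h + int b1) - int (y0 * h + y1)" unfolding w_def by (simp add: algebra_simps)
    hence "odd w" using True by simp
    hence "w \<ge> 1" using w0 by presburger
    hence "int m * w \<ge> int m" using mult_left_mono[of 1 w "int m"] by simp
    thus ?thesis using True Ew hm m unfolding tmin_def by simp
  next
    case False
    thus ?thesis using Ew w0 hm m unfolding tmin_def by simp
  qed
next
  case False
  then obtain h where m: "m = 2*h" by (metis evenE)
  have h0: "h > 0" using assms m by simp
  define w where "w = (2 * int b0 - int y0) * (2 * int h - 1) + 2 * (2 * int b1 - int y1)"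
  have Ew: "E m y0 y1 b0 b1 = int h * w"
    unfolding E_def w_def m choose2_even using h0 by (simp add: algebra_simps of_nat_diff)
  have w0: "w \<ge> 0" using assms Ew h0 by (simp add: zero_le_mult_iff)
  show ?thesis
  proof (cases "odd y0")
    case True
    have "w = 2 * (int b0 * (2 * int h - 1) + 2 * int b1 - int y1 - int y0 * int h) + int y0" unfolding w_def by (simp add: algebra_simps)
    hence "odd w" using True by simp
    hence "w \<ge> 1" using w0 by presburger
    hence "int h * w \<ge> int h" using mult_left_mono[of 1 w "int h"] by simp
    thus ?thesis using True Ew m False unfolding tmin_def by simp
  next
    case False
    thus ?thesis using Ew w0 m h0 unfolding tmin_def by simp
  qed
qed


lemma even_z: "even ((z::nat) + z mod 2)"
  by presburger

lemma witE:
  assumes "m > 0" "y0 \<ge> 3" "y1 \<ge> 2*L + m + 2"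
  shows "\<exists>b0 b1. b0 \<le> y0 \<and> b1 \<le> y1 \<and> L \<le> b1 \<and> L \<le> y1 - b1 \<and> E m y0 y1 b0 b1 = tmin m y0 y1"
proof (cases "odd m")
  case True
  then obtain h where m: "m = 2*h+1" by (metis oddE)
  have hm: "(m - 1) div 2 = h" using m by simp
  define r where "r = y0 mod 2"
  define P where "P = (y0*h + y1) mod 2"
  define X where "X = y1 + r*h + P"
  have y0r: "y0 = 2*(y0 div 2) + r" unfolding r_def by simp
  have "X + 2*(y0 div 2)*h = y0*h + y1 + P"
    unfolding X_def by (subst (2) y0r) (simp add: algebra_simps)
  hence "even (X + 2*(y0 div 2)*h)" using even_z[of "y0*h+y1"] unfolding P_def by simp
  hence "even X" by simp
  then obtain b1 where b1: "X = 2*b1" by blast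
  define b0 where "b0 = y0 div 2"
  have r1: "r \<le> 1" "P \<le> 1" unfolding r_def P_def by auto
  have rh: "r*h \<le> h" using r1 by simp
  have EE: "E m y0 y1 b0 b1 = int m * int P"
  proof -
    have e1: "2 * int b0 - int y0 = - int r" using y0r unfolding b0_def by linarith
    have "2 * int b1 = int y1 + int r * int h + int P" using arg_cong[OF b1, of int] unfolding X_def by simp
    hence e2: "2 * int b1 - int y1 = int r * int h + int P" by linarith
    have C: "int (m choose 2) = int m * int h" using m choose2_odd by (simp add: algebra_simps)
    show ?thesis unfolding E_def e1 e2 C by (simp add: algebra_simps)
  qed
  have TT: "tmin m y0 y1 = int m * int P"
  proof -
    have "P = (if odd (y0*h+y1) then 1 else 0)" unfolding P_def by (simp add: even_iff_mod_2_eq_zero)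
    thus ?thesis unfolding tmin_def hm using True by simp
  qed
  have B0: "b0 \<le> y0" unfolding b0_def by simp
  have bb: "2*b1 = y1 + r*h + P" using b1 unfolding X_def by simp
  have "2*b1 \<le> y1 + h + 1" using bb rh r1 by linarith
  have LL: "L \<le> b1 \<and> b1 \<le> y1 \<and> L \<le> y1 - b1" using bb assms(3) m \<open>2*b1 \<le> y1 + h + 1\<close> by linarith
  show ?thesis using EE TT B0 LL by (intro exI[of _ b0] exI[of _ b1]) simp
next
  case False
  hence "even m" by simp
  then obtain h where m: "m = 2*h" by (rule evenE)
  have h0: "h \<ge> 1" using assms m by simp
  define r where "r = y0 mod 2"
  define s where "s = (y1 + r*(1+h)) mod 2"
  have r1: "r \<le> 1" "s \<le> 1" unfolding r_def s_def by auto
  have y0r: "y0 = 2*(y0 div 2) + r" unfolding r_def by simp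
  have y0d: "y0 div 2 \<ge> 1" using assms(2) by simp
  define b0 where "b0 = y0 div 2 + r - s"
  define Y where "Y = int y1 + int r + int s * (2 * int h - 1) - int r * int h"
  define W where "W = int r * int h - int s * int h + int s"
  have eqY: "Y + 2 * W = int (y1 + r*(1+h) + (y1 + r*(1+h)) mod 2)"
    unfolding Y_def s_def W_def by (simp add: algebra_simps)
  have evZ: "even (int (y1 + r*(1+h) + (y1 + r*(1+h)) mod 2))"
    using even_z[of "y1 + r*(1+h)"] by (simp only: even_of_nat)
  have "even (Y + 2 * W)" unfolding eqY by (rule evZ)
  hence "even Y" by simp
  then obtain B1 where B1: "Y = 2*B1" by blast
  have rs: "r = 0 \<or> r = 1" "s = 0 \<or> s = 1" using r1 by auto
  have Ylo: "Y \<ge> int y1 - int h" and Yhi: "Y \<le> int y1 + int m" unfolding Y_def m using rs h0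
    by (auto elim!: disjE)
  define b1 where "b1 = nat B1"
  have B1b: "int b1 = B1" "L \<le> b1" "b1 \<le> y1" "L \<le> y1 - b1"
    using B1 Ylo Yhi assms(3) m h0 unfolding b1_def by linarith+
  have b0i: "2 * int b0 - int y0 = int r - 2 * int s"
    using y0r y0d r1 unfolding b0_def by linarith
  have EE: "E m y0 y1 b0 b1 = int h * int r"
  proof -
    have e2: "2 * int b1 - int y1 = int r + int s * (2 * int h - 1) - int r * int h"
      using B1b(1) B1 unfolding Y_def by linarith
    have C: "int (m choose 2) = int h * (2 * int h - 1)" using m choose2_even h0 by (simp add: of_nat_diff)
    have mm: "int m = 2 * int h" using m by simp
    show ?thesis unfolding E_def e2 b0i C mm by (simp add: algebra_simps)
  qed
  have TT: "tmin m y0 y1 = int h * int r"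
  proof -
    have "r = (if odd y0 then 1 else 0)" unfolding r_def by (simp add: even_iff_mod_2_eq_zero)
    thus ?thesis unfolding tmin_def m by simp
  qed
  have B0: "b0 \<le> y0" unfolding b0_def using y0r r1 by linarith
  show ?thesis using EE TT B0 B1b(2-4) by (intro exI[of _ b0] exI[of _ b1]) simp
qed


lemma tmin_bounds: "0 \<le> tmin m y0 y1" "tmin m y0 y1 \<le> int m"
  unfolding tmin_def by auto

lemma adm_red:
  assumes "admissible q n a bY bN"
  shows "\<exists>a0 b0 b1 c0 c1. a = (a0,0,0) \<and> bY = (b0,b1,0) \<and> bN = (c0,c1,0) \<and> a0 \<le> n \<and>
     b0 \<le> a0 \<and> b1 \<le> n - a0 \<and> c0 \<le> n - a0 \<and> c1 \<le> a0"
proof -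
  obtain a0 a1 a2 where a: "a = (a0,a1,a2)" by (cases a) auto
  obtain b0 b1 b2 where b: "bY = (b0,b1,b2)" by (cases bY) auto
  obtain c0 c1 c2 where c: "bN = (c0,c1,c2)" by (cases bN) auto
  show ?thesis using assms unfolding admissible_def a b c by auto
qed

lemma YN_first:
  "Yst (n,0,0) (a0,0,0) = (a0, n - a0, 0)" "Nst (n,0,0) (a0,0,0) = (n - a0, a0, 0)"
  by auto

lemma YN_second:
  "snd (snd (Yst (x0,x1,0) (b0,b1,0))) = x1 - b1" "snd (snd (Nst (x0,x1,0) (b0,b1,0))) = b1"
  by auto

lemma pow_bound: "q \<ge> 19 \<Longrightarrow> 18 * q^4 \<le> 5 * (2::nat)^q"
proof (induction q rule: dec_induct)
  case base
  then show ?case by simp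
next
  case (step q)
  have q3: "q^3 \<ge> 19 * q^2" using step(1) by (simp add: power_numeral_reduce mult_right_mono)
  have q4: "q^4 \<ge> 19 * q^3" using step(1) by (simp add: power_numeral_reduce mult_right_mono)
  have q2: "q^2 \<ge> 19 * q" using step(1) by (simp add: power2_eq_square mult_right_mono)
  have "(Suc q)^4 = q^4 + 4*q^3 + 6*q^2 + 4*q + 1"
    by (simp add: power_numeral_reduce algebra_simps)
  also have "\<dots> \<le> 2 * q^4" using q2 q3 q4 step(1) by linarith
  finally have "18 * (Suc q)^4 \<le> 2 * (18 * q^4)" by linarith
  also have "\<dots> \<le> 2 * (5 * 2^q)" using step(3) by linarith
  finally show ?case by simp
qed

lemma n_bound:
  assumes "q \<ge> 19" "real n \<ge> 2 ^ q / real (bsum q 2)"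
  shows "n \<ge> 6 * q^2"
proof -
  have bs: "2 * bsum q 2 = q^2 + q + 2"
    unfolding bsum2 using choose_two[of q] by (cases q) (auto simp: power2_eq_square algebra_simps)
  have bpos: "bsum q 2 > 0" unfolding bsum2 by simp
  have "real n * real (bsum q 2) \<ge> 2^q" using assms(2) bpos by (simp add: divide_le_eq)
  hence "real (n * bsum q 2) \<ge> real (2^q)" by simp
  hence nb: "n * bsum q 2 \<ge> 2^q" by (simp only: of_nat_le_iff)
  have q2: "q^2 \<ge> 19 * q" using assms(1) by (simp add: power2_eq_square mult_right_mono)
  have b5: "5 * bsum q 2 \<le> 3 * q^2" using bs q2 assms(1) by linarith
  have f1: "n * (5 * bsum q 2) \<ge> 18 * q^4" using nb pow_bound[OF assms(1)] by linarith
  have f2: "18 * q^4 = (6 * q^2) * (3 * q^2)" by (simp add: power_numeral_reduce)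
  have f3: "(6 * q^2) * (5 * bsum q 2) \<le> (6 * q^2) * (3 * q^2)" by (rule mult_left_mono[OF b5]) simp
  have "(6 * q^2) * (5 * bsum q 2) \<le> n * (5 * bsum q 2)" using f1 f2 f3 by linarith
  thus ?thesis using bpos by simp
qed


lemma Bform:
  assumes "q \<ge> 19"
  shows "2 * tmin (q-2) (n div 2) (if even n then n div 2 else n div 2 + 1) =
     (if n mod 4 = 0 then 0
              else if n mod 4 = 1 then 2 * (int q mod 2)
              else if n mod 4 = 2 then (1 - int q ^ 3) mod 4
              else (1 + int q ^ 3) mod 4) * int (q - 2)"
proof -
  have c3: "int q ^ 3 mod 4 = int ((q mod 4)^3 mod 4)"
    by (metis of_nat_mod of_nat_numeral of_nat_power power_mod)
  have m1: "(1 - int q ^ 3) mod 4 = (1 - int ((q mod 4)^3 mod 4)) mod 4"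
    by (metis c3 mod_diff_right_eq)
  have p1: "(1 + int q ^ 3) mod 4 = (1 + int ((q mod 4)^3 mod 4)) mod 4"
    by (metis c3 mod_add_right_eq)
  have q2: "int q mod 2 = int (q mod 4 mod 2)"
    by (simp add: of_nat_mod mod_mod_cancel)
  have Q1: "q mod 4 = 1 \<Longrightarrow> odd (q-2) \<and> odd ((q-2-1) div 2)" using assms by presburger
  have Q3: "q mod 4 = 3 \<Longrightarrow> odd (q-2) \<and> even ((q-2-1) div 2)" using assms by presburger
  have Q0: "q mod 4 = 0 \<or> q mod 4 = 2 \<Longrightarrow> even (q-2) \<and> 2 * ((q-2) div 2) = q - 2" using assms by presburger
  have Q0': "q mod 4 = 0 \<or> q mod 4 = 2 \<Longrightarrow> 2 * int ((q-2) div 2) = int (q - 2)"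
  proof -
    assume "q mod 4 = 0 \<or> q mod 4 = 2"
    hence "2 * ((q-2) div 2) = q - 2" using assms by presburger
    thus ?thesis by (metis of_nat_mult of_nat_numeral)
  qed
  have N0: "n mod 4 = 0 \<Longrightarrow> even n \<and> even (n div 2)" by presburger
  have N1: "n mod 4 = 1 \<Longrightarrow> odd n \<and> even (n div 2)" by presburger
  have N2: "n mod 4 = 2 \<Longrightarrow> even n \<and> odd (n div 2)" by presburger
  have N3: "n mod 4 = 3 \<Longrightarrow> odd n \<and> odd (n div 2)" by presburger
  have "q mod 4 = 0 \<or> q mod 4 = 1 \<or> q mod 4 = 2 \<or> q mod 4 = 3" by auto
  moreover have "n mod 4 = 0 \<or> n mod 4 = 1 \<or> n mod 4 = 2 \<or> n mod 4 = 3" by auto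
  ultimately show ?thesis
    unfolding m1 p1 q2
    apply (elim disjE)
    using Q0 Q0' Q1 Q3 N0 N1 N2 N3
    by (simp_all add: tmin_def)
qed


lemma qval_red:
  assumes "a0 \<le> n" "b0 \<le> a0" "b1 \<le> n - a0" "c0 \<le> n - a0" "c1 \<le> a0"
  shows "qval q n (a0,0,0) (b0,b1,0) (c0,c1,0) =
    (let d = (2 * int a0 - int n) * int ((q-1) choose 2);
         dY = E (q-2) a0 (n - a0) b0 b1;
         dN = E (q-2) (n - a0) a0 c0 c1
     in min (min (d + 2 * dY) (d - 2 * dY)) (min (- d + 2 * dN) (- d - 2 * dN)))"
  unfolding qval_def YN_first imb_first[OF assms(1)] imb_red[OF assms(2,3)] imb_red[OF assms(4,5)] ..

lemma adm_iff:
  assumes "a0 \<le> n" "b0 \<le> a0" "b1 \<le> n - a0" "c0 \<le> n - a0" "c1 \<le> a0"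
  shows "admissible q n (a0,0,0) (b0,b1,0) (c0,c1,0) \<longleftrightarrow>
    (2 * int a0 - int n) * int ((q-1) choose 2) \<ge> 0 \<and> E (q-2) a0 (n - a0) b0 b1 \<ge> 0 \<and>
     E (q-2) (n - a0) a0 c0 c1 \<ge> 0"
  unfolding admissible_def YN_first imb_first[OF assms(1)] imb_red[OF assms(2,3)] imb_red[OF assms(4,5)]
  using assms by simp


theorem lemma15:
  fixes q n :: nat
  assumes "q \<ge> 19"
    and "real n \<ge> 2 ^ q / real (bsum q 2)"
  shows "Delta q n =
           - int (n mod 2) * int ((q - 1) choose 2)
           - (if n mod 4 = 0 then 0
              else if n mod 4 = 1 then 2 * (int q mod 2)
              else if n mod 4 = 2 then (1 - int q ^ 3) mod 4
              else (1 + int q ^ 3) mod 4) * int ((q - 2) choose 1)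
       \<and> (\<exists>a bY bN. admissible q n a bY bN \<and> qval q n a bY bN = Delta q n \<and>
            (\<forall>s \<in> {Yst (Yst (n, 0, 0) a) bY, Nst (Yst (n, 0, 0) a) bY,
                    Yst (Nst (n, 0, 0) a) bN, Nst (Nst (n, 0, 0) a) bN}.
               snd (snd s) \<ge> (q - 2) ^ 2 + bsum (q - 2) 2))"
proof -
  define m where "m = q - 2"
  define k where "k = n div 2"
  define D where "D = (q-1) choose 2"
  define L where "L = (q - 2) ^ 2 + bsum (q - 2) 2"
  have m17: "m \<ge> 17" "m > 0" using assms(1) unfolding m_def by auto
  have qm: "q = m + 2" using assms(1) unfolding m_def by auto
  have C2: "2 * (m choose 2) = m * (m - 1)"
  proof -
    obtain j where j: "m = Suc j" using m17 by (cases m) auto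
    have "even (m * (m - 1))" unfolding j by simp
    thus ?thesis using choose_two[of m] by simp
  qed
  have Dm: "D = (m choose 2) + m"
    unfolding D_def using qm by (simp add: numeral_2_eq_2)
  have "m * 2 \<le> m * (m - 1)" using m17 by (intro mult_left_mono) auto
  hence D2m: "int D \<ge> 2 * int m" using Dm C2 by linarith
  have Cle: "2 * (m choose 2) \<le> m * m" using C2 by (simp add: mult_le_mono)
  have nb: "n \<ge> 6 * q^2" using n_bound[OF assms] .
  have q2: "q^2 = m*m + 4*m + 4" unfolding qm by (simp add: power2_eq_square algebra_simps)
  have Lv: "L = m*m + 1 + m + (m choose 2)" unfolding L_def m_def[symmetric] bsum2 by (simp add: power2_eq_square)
  have kL: "k \<ge> 2*L + m + 2" "k \<ge> 3" using nb q2 Lv Cle unfolding k_def by linarith+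
  define V where "V = (if even n then -2 * tmin m k k else - int D - 2 * tmin m k (k+1))"
  define S where "S = {qval q n a bY bN | a bY bN. admissible q n a bY bN}"
  have tb: "\<And>y0 y1. 0 \<le> tmin m y0 y1" "\<And>y0 y1. tmin m y0 y1 \<le> int m" using tmin_bounds by auto
  have upper: "x \<le> V" if xS: "x \<in> S" for x
  proof -
    obtain a bY bN where adm: "admissible q n a bY bN" and x: "x = qval q n a bY bN"
      using xS unfolding S_def by blast
    obtain a0 b0 b1 c0 c1 where abc: "a = (a0,0,0)" "bY = (b0,b1,0)" "bN = (c0,c1,0)" and
      le: "a0 \<le> n" "b0 \<le> a0" "b1 \<le> n - a0" "c0 \<le> n - a0" "c1 \<le> a0"
      using adm_red[OF adm] by blast
    define d where "d = (2 * int a0 - int n) * int D"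
    define dY where "dY = E m a0 (n - a0) b0 b1"
    define dN where "dN = E m (n - a0) a0 c0 c1"
    have cond: "d \<ge> 0" "dY \<ge> 0" "dN \<ge> 0"
      using adm unfolding abc adm_iff[OF le] d_def dY_def dN_def D_def m_def by auto
    have xv: "x = min (min (d + 2 * dY) (d - 2 * dY)) (min (- d + 2 * dN) (- d - 2 * dN))"
      unfolding x abc qval_red[OF le] d_def dY_def dN_def D_def m_def Let_def ..
    have Dpos: "int D > 0" using D2m m17 by linarith
    have "2 * int a0 - int n \<ge> 0" using cond(1) Dpos unfolding d_def by (simp add: zero_le_mult_iff)
    then consider "2 * a0 = n" | "2 * a0 = n + 1" | "2 * a0 \<ge> n + 2" by linarith
    thus ?thesis
    proof cases
      case 1
      hence e: "even n" "a0 = k" "n - a0 = k" unfolding k_def by auto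
      have "dY = E m k k b0 b1" unfolding dY_def using e by simp
      hence "dY \<ge> tmin m k k" using lowE[OF m17(2)] cond(2) by simp
      moreover have "d = 0" using 1 unfolding d_def by simp
      ultimately show ?thesis using xv e unfolding V_def by simp
    next
      case 2
      hence e: "odd n" "a0 = k + 1" "n - a0 = k" unfolding k_def by presburger+
      have "dN = E m k (k+1) c0 c1" unfolding dN_def using e by simp
      hence "dN \<ge> tmin m k (k+1)" using lowE[OF m17(2)] cond(3) by simp
      moreover have "d = int D" using 2 unfolding d_def by simp
      ultimately show ?thesis using xv e unfolding V_def by simp
    next
      case 3
      hence "2 * int a0 - int n \<ge> 2" by linarith
      hence "d \<ge> 2 * int D" unfolding d_def using Dpos
        by (metis mult_right_mono of_nat_0_le_iff mult.commute)
      moreover have "V \<ge> - int D - 2 * int m" unfolding V_def using tb(2)[of k k] tb(2)[of k "k+1"] D2m by auto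
      ultimately show ?thesis using xv cond D2m by linarith
    qed
  qed
  have wit: "\<exists>a bY bN. admissible q n a bY bN \<and> qval q n a bY bN = V \<and>
            (\<forall>s \<in> {Yst (Yst (n, 0, 0) a) bY, Nst (Yst (n, 0, 0) a) bY,
                    Yst (Nst (n, 0, 0) a) bN, Nst (Nst (n, 0, 0) a) bN}. snd (snd s) \<ge> L)"
  proof (cases "even n")
    case True
    hence nk: "n = 2*k" unfolding k_def by simp
    obtain b0 b1 where b: "b0 \<le> k" "b1 \<le> k" "L \<le> b1" "L \<le> k - b1" "E m k k b0 b1 = tmin m k k"
      using witE[OF m17(2) kL(2)] kL(1) by blast
    have le: "k \<le> n" "b0 \<le> k" "b1 \<le> n - k" "b0 \<le> n - k" "b1 \<le> k" using b nk by auto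
    have nk': "n - k = k" using nk by simp
    have "admissible q n (k,0,0) (b0,b1,0) (b0,b1,0)"
      unfolding adm_iff[OF le] nk' m_def[symmetric] b(5) using nk tb by simp
    moreover have "qval q n (k,0,0) (b0,b1,0) (b0,b1,0) = V"
      unfolding qval_red[OF le] nk' m_def[symmetric] b(5) Let_def V_def using nk True tb by simp
    moreover have "\<forall>s \<in> {Yst (Yst (n, 0, 0) (k,0,0)) (b0,b1,0), Nst (Yst (n, 0, 0) (k,0,0)) (b0,b1,0),
                    Yst (Nst (n, 0, 0) (k,0,0)) (b0,b1,0), Nst (Nst (n, 0, 0) (k,0,0)) (b0,b1,0)}. snd (snd s) \<ge> L"
      unfolding YN_first nk' using b by auto
    ultimately show ?thesis by blast
  next
    case False
    hence nk: "n = 2*k + 1" unfolding k_def by presburger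
    obtain b0 b1 where b: "b0 \<le> k+1" "b1 \<le> k" "L \<le> b1" "L \<le> k - b1" "E m (k+1) k b0 b1 = tmin m (k+1) k"
      using witE[OF m17(2) _ kL(1), of "k+1"] kL(2) by auto
    obtain c0 c1 where c: "c0 \<le> k" "c1 \<le> k+1" "L \<le> c1" "L \<le> k + 1 - c1" "E m k (k+1) c0 c1 = tmin m k (k+1)"
    proof -
      have "k + 1 \<ge> 2*L + m + 2" using kL(1) by simp
      from witE[OF m17(2) kL(2) this] show ?thesis using that by blast
    qed
    have le: "k+1 \<le> n" "b0 \<le> k+1" "b1 \<le> n - (k+1)" "c0 \<le> n - (k+1)" "c1 \<le> k+1" using b c nk by auto
    have nk': "n - (k+1) = k" using nk by simp
    have d: "(2 * int (k+1) - int n) = 1" using nk by simp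
    have "admissible q n (k+1,0,0) (b0,b1,0) (c0,c1,0)"
      unfolding adm_iff[OF le] nk' m_def[symmetric] b(5) c(5) d using tb by simp
    moreover have "qval q n (k+1,0,0) (b0,b1,0) (c0,c1,0) = V"
    proof -
      have "int D - 2 * tmin m (k+1) k \<ge> - int D - 2 * tmin m k (k+1)"
        using tb[of "k+1" k] tb[of k "k+1"] D2m by linarith
      thus ?thesis
        unfolding qval_red[OF le] nk' m_def[symmetric] b(5) c(5) Let_def V_def d D_def[symmetric]
        using False tb by simp
    qed
    moreover have "\<forall>s \<in> {Yst (Yst (n, 0, 0) (k+1,0,0)) (b0,b1,0), Nst (Yst (n, 0, 0) (k+1,0,0)) (b0,b1,0),
                    Yst (Nst (n, 0, 0) (k+1,0,0)) (c0,c1,0), Nst (Nst (n, 0, 0) (k+1,0,0)) (c0,c1,0)}. snd (snd s) \<ge> L"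
      unfolding YN_first nk' using b c by auto
    ultimately show ?thesis by blast
  qed
  have fin: "finite S"
  proof -
    define A where "A = {..n} \<times> {..n} \<times> {..n}"
    have "S \<subseteq> (\<lambda>(a, bY, bN). qval q n a bY bN) ` (A \<times> A \<times> A)"
    proof
      fix x assume "x \<in> S"
      then obtain a bY bN where adm: "admissible q n a bY bN" and x: "x = qval q n a bY bN"
        unfolding S_def by blast
      obtain a0 b0 b1 c0 c1 where abc: "a = (a0,0,0)" "bY = (b0,b1,0)" "bN = (c0,c1,0)" and
        le: "a0 \<le> n" "b0 \<le> a0" "b1 \<le> n - a0" "c0 \<le> n - a0" "c1 \<le> a0"
        using adm_red[OF adm] by blast
      have "(a, bY, bN) \<in> A \<times> A \<times> A" unfolding A_def abc using le by auto
      thus "x \<in> (\<lambda>(a, bY, bN). qval q n a bY bN) ` (A \<times> A \<times> A)" using x by force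
    qed
    moreover have "finite A" unfolding A_def by simp
    ultimately show ?thesis by (meson finite_SigmaI finite_imageI finite_subset)
  qed
  have DV: "Delta q n = V"
  proof -
    obtain a bY bN where "admissible q n a bY bN" "qval q n a bY bN = V" using wit by blast
    hence "V \<in> S" unfolding S_def by blast
    thus ?thesis unfolding Delta_def S_def[symmetric] using Max_eqI[OF fin upper] by blast
  qed
  have form: "V = - int (n mod 2) * int ((q - 1) choose 2)
           - (if n mod 4 = 0 then 0
              else if n mod 4 = 1 then 2 * (int q mod 2)
              else if n mod 4 = 2 then (1 - int q ^ 3) mod 4
              else (1 + int q ^ 3) mod 4) * int ((q - 2) choose 1)"
    using Bform[OF assms(1), of n] unfolding V_def k_def[symmetric] m_def[symmetric] D_def[symmetric]
    by (cases "even n") (auto simp: odd_iff_mod_2_eq_one)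
  show ?thesis using DV form wit unfolding L_def by auto
qed

end
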